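(* Let $H=(V,E)$ be a hypergraph whose vertex set $V$ is a partition of $[n]$ into sets of cardinality at least $2$, and suppose $H$ is downward-closed (for every $e\in E$ and every $e'\subseteq e$ with $|e'|>1$, $e'\in E$). Then \[\operatorname{aff}\mathrm{MC}^H=\Big\{w\in\mathbb{R}^{\mathcal{J}^H}\ \Big|\ w(I)=1\ \forall I\in V;\ \ w_J=\sum_{J'\in\mathcal{J}^{e'}:\, J'\supsetneq J}w_{J'}\ \ \forall e,e'\in L(V)\cup E \text{ with } e\subsetneq e',\ |e'|=|e|+1,\ \forall J\in\mathcal{J}^e\Big\}.\]
   Context: Let $n$ be a positive integer, $[n]=\{1,\dots,n\}$. A hypergraph $H=(V,E)$ here has as vertex set $V$ a family of pairwise disjoint subsets of $[n]$, each of cardinality at least $2$, and hyperedge set $E$ consisting of subsets $e\subseteq V$ with $|e|\ge 2$. Write $L(V)=\{\{I\}: I\in V\}$. For a nonempty $e\subseteq V$, $\mathcal{J}^e$ denotes the family of sets $J\subseteq \bigcup_{I\in e} I$ with $|J\cap I|=1$ for every $I\in e$. Let $\mathcal{J}^H=\bigcup_{e\in L(V)\cup E}\mathcal{J}^e$. For $w\in\mathbb{R}^{\mathcal{J}^H}$ write $w_i=w_{\{i\}}$ and $w(A)=\sum_{i\in A}w_i$. Let $\mathscr{S}^H=\{w\in\{0,1\}^{\mathcal{J}^H}: w(I)=1\ \forall I\in V;\ w_J=\prod_{i\in J}w_i\ \forall J\in\mathcal{J}^H, |J|>1\}$, $\mathrm{MC}^H=\operatorname{conv}\mathscr{S}^H$,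 and $\operatorname{aff}$ denotes affine hull. *)

theory Defs
  imports "HOL-Analysis.Analysis" "HOL-Library.Function_Algebras"
begin

instantiation "fun" :: (type, real_vector) real_vector
begin
definition scaleR_fun :: "real \<Rightarrow> ('a \<Rightarrow> 'b) \<Rightarrow> 'a \<Rightarrow> 'b"
  where "scaleR_fun r f = (\<lambda>x. r *\<^sub>R f x)"
instance
  by standard (auto simp: scaleR_fun_def fun_eq_iff scaleR_add_right scaleR_add_left)
end

definition is_hypergraph :: "nat \<Rightarrow> nat set set \<Rightarrow> nat set set set \<Rightarrow> bool" where
  "is_hypergraph n V E \<longleftrightarrow>
     (\<forall>I\<in>V. I \<subseteq> {1..n} \<and> card I \<ge> 2) \<and> pairwise disjnt V \<and>
     (\<forall>e\<in>E. e \<subseteq> V \<and> card e \<ge> 2)"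

definition downward_closed :: "nat set set set \<Rightarrow> bool" where
  "downward_closed E \<longleftrightarrow> (\<forall>e\<in>E. \<forall>e'. e' \<subseteq> e \<and> card e' > 1 \<longrightarrow> e' \<in> E)"

definition LV :: "nat set set \<Rightarrow> nat set set set" where
  "LV V = (\<lambda>I. {I}) ` V"

definition JJ :: "nat set set \<Rightarrow> nat set set" where
  "JJ e = {J. J \<subseteq> \<Union>e \<and> (\<forall>I\<in>e. card (J \<inter> I) = 1)}"

definition JH :: "nat set set \<Rightarrow> nat set set set \<Rightarrow> nat set set" where
  "JH V E = \<Union> (JJ ` (LV V \<union> E))"

text \<open>Elements of \<real>^{\<J>^H} are represented as functions on all finite index sets
  that vanish outside \<J>^H.\<close>
definition RJH :: "nat set set \<Rightarrow> nat set set set \<Rightarrow> (nat set \<Rightarrow> real) set" where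
  "RJH V E = {w. \<forall>J. J \<notin> JH V E \<longrightarrow> w J = 0}"

text \<open>w(A) = sum of w_i = w_{{i}} over i \<in> A\<close>
definition wsum :: "(nat set \<Rightarrow> real) \<Rightarrow> nat set \<Rightarrow> real" where
  "wsum w A = (\<Sum>i\<in>A. w {i})"

definition SH :: "nat set set \<Rightarrow> nat set set set \<Rightarrow> (nat set \<Rightarrow> real) set" where
  "SH V E = {w \<in> RJH V E.
      (\<forall>J\<in>JH V E. w J \<in> {0, 1}) \<and>
      (\<forall>I\<in>V. wsum w I = 1) \<and>
      (\<forall>J\<in>JH V E. card J > 1 \<longrightarrow> w J = (\<Prod>i\<in>J. w {i}))}"

definition MC :: "nat set set \<Rightarrow> nat set set set \<Rightarrow> (nat set \<Rightarrow> real) set" where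
  "MC V E = convex hull (SH V E)"

end

theory Submission imports Defs begin

locale blocks =
  fixes V :: "nat set set"
  assumes finV: "finite V"
    and blk: "\<And>I. I \<in> V \<Longrightarrow> finite I \<and> I \<noteq> {}"
    and disj: "pairwise disjnt V"
begin

abbreviation "X \<equiv> PiE V (\<lambda>I. I)"

lemma finX: "finite X"
  using finV blk by (auto intro!: finite_PiE)

lemma Xne: "X \<noteq> {}"
  using blk by (auto simp: PiE_eq_empty_iff)

lemma same_block:
  assumes "I \<in> V" "I' \<in> V" "a \<in> I" "a \<in> I'" shows "I = I'"
  using disj assms unfolding pairwise_def disjnt_def by blast

lemma KL:
  assumes "e \<subseteq> V" "x \<in> X" "z \<in> X"
  shows "x ` e = z ` e \<longleftrightarrow> (\<forall>I\<in>e. x I = z I)"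
proof
  assume h: "x ` e = z ` e"
  show "\<forall>I\<in>e. x I = z I"
  proof
    fix I assume I: "I \<in> e"
    then have "x I \<in> z ` e" using h by blast
    then obtain I' where I': "I' \<in> e" "x I = z I'" by blast
    have "x I \<in> I" using assms I by (auto simp: PiE_iff)
    moreover have "z I' \<in> I'" using assms I' by (auto simp: PiE_iff)
    ultimately
    have "I = I'" using same_block[of I I' "x I"] I I' assms(1) by auto
    then show "x I = z I" using I' by simp
  qed
qed (auto intro: image_cong)

lemma upd_X: "z \<in> X \<Longrightarrow> I \<in> V \<Longrightarrow> i \<in> I \<Longrightarrow> z(I := i) \<in> X"
  by (auto simp: PiE_iff extensional_def)

lemma G:
  fixes w :: "nat set \<Rightarrow> real"
  assumes "finite K" "\<forall>e\<in>K. e \<subseteq> V" "\<forall>e\<in>K. \<forall>e'. e' \<subseteq> e \<longrightarrow> e' \<in> K"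
    and cons: "\<forall>e\<in>K. \<forall>I\<in>e. \<forall>y\<in>X. w (y`(e-{I})) = (\<Sum>i\<in>I. w (insert i (y`(e-{I}))))"
  shows "\<exists>\<mu>. \<forall>e\<in>K. \<forall>y\<in>X. w (y`e) = (\<Sum>x\<in>{x\<in>X. x`e = y`e}. \<mu> x)"
  using assms
proof (induct "card K" arbitrary: K rule: less_induct)
  case less
  show ?case
  proof (cases "K = {}")
    case True then show ?thesis by auto
  next
    case False
    define m where "m = Max (card ` K)"
    have "m \<in> card ` K" unfolding m_def using False less.prems(1) by auto
    then obtain e where eK: "e \<in> K" and em: "card e = m" by auto
    have emax: "card f \<le> card e" if "f \<in> K" for f
      unfolding em m_def using that less.prems(1) by auto
    have eV: "e \<subseteq> V" using eK less.prems(2) by auto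
    have finsub: "finite f" if "f \<subseteq> V" for f using that finV finite_subset by auto
    have notsub: "\<not> e \<subseteq> f" if "f \<in> K" "f \<noteq> e" for f
    proof
      assume "e \<subseteq> f"
      moreover have "finite f" using finsub that less.prems(2) by auto
      ultimately have "e = f" using card_subset_eq emax[OF that(1)] by (metis le_antisym card_mono)
      then show False using that by simp
    qed
    define K' where "K' = K - {e}"
    have cK': "card K' < card K" unfolding K'_def using card_Diff1_less[OF less.prems(1) eK] .
    have dK': "\<forall>f\<in>K'. \<forall>f'. f' \<subseteq> f \<longrightarrow> f' \<in> K'"
    proof (intro ballI allI impI)
      fix f f' assume f: "f \<in> K'" "f' \<subseteq> f"
      then have "f' \<in> K" using less.prems(3) unfolding K'_def by blast
      moreover have "f' \<noteq> e" using notsub[of f] f unfolding K'_def by auto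
      ultimately show "f' \<in> K'" unfolding K'_def by auto
    qed
    obtain \<mu>0 where mu0: "\<forall>f\<in>K'. \<forall>y\<in>X. w (y`f) = (\<Sum>x\<in>{x\<in>X. x`f = y`f}. \<mu>0 x)"
    proof -
      have "finite K'" "\<forall>e\<in>K'. e \<subseteq> V"
        "\<forall>e\<in>K'. \<forall>I\<in>e. \<forall>y\<in>X. w (y`(e-{I})) = (\<Sum>i\<in>I. w (insert i (y`(e-{I}))))"
        using less.prems(1,2) less.prems(4) unfolding K'_def by (simp, blast, blast)
      from less.hyps[OF cK' this(1,2) dK' this(3)] show ?thesis using that by blast
    qed
    obtain x0 where x0: "x0 \<in> X" using Xne by auto
    define D where "D J = w J - (\<Sum>x\<in>{x\<in>X. x`e = J}. \<mu>0 x)" for J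
    define corr where "corr x = (if \<forall>I\<in>V-e. x I = x0 I then D (x`e) else 0)" for x
    define \<mu> where "\<mu> x = \<mu>0 x + corr x" for x
    have sumsplit: "(\<Sum>x\<in>{x\<in>X. x`f = y`f}. \<mu> x) = (\<Sum>x\<in>{x\<in>X. x`f = y`f}. \<mu>0 x) + (\<Sum>x\<in>{x\<in>X. x`f = y`f}. corr x)" for f y
      unfolding \<mu>_def by (simp add: sum.distrib)
    show ?thesis
    proof (intro exI ballI)
      fix f y assume f: "f \<in> K" and y: "y \<in> X"
      show "w (y`f) = (\<Sum>x\<in>{x\<in>X. x`f = y`f}. \<mu> x)"
      proof (cases "f = e")
        case True
        define z where "z = restrict (\<lambda>I. if I \<in> e then y I else x0 I) V"
        have zX: "z \<in> X" using x0 y by (auto simp: z_def PiE_iff)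
        have "{x\<in>X. x`e = y`e \<and> (\<forall>I\<in>V-e. x I = x0 I)} = {z}"
        proof (intro set_eqI iffI)
          fix x assume x: "x \<in> {x\<in>X. x`e = y`e \<and> (\<forall>I\<in>V-e. x I = x0 I)}"
          then have "\<forall>I\<in>e. x I = y I" using KL[OF eV, of x y] y by auto
          then show "x \<in> {z}" using x by (auto simp: z_def PiE_iff extensional_def fun_eq_iff)
        next
          fix x assume "x \<in> {z}"
          then show "x \<in> {x\<in>X. x`e = y`e \<and> (\<forall>I\<in>V-e. x I = x0 I)}"
            using zX eV by (auto simp: z_def intro!: image_cong)
        qed
        then have zs: "{x\<in>{x\<in>X. x`e = y`e}. \<forall>I\<in>V-e. x I = x0 I} = {z}" by auto
        have "(\<Sum>x\<in>{x\<in>X. x`e = y`e}. corr x) = (\<Sum>x\<in>{x\<in>{x\<in>X. x`e = y`e}. \<forall>I\<in>V-e. x I = x0 I}. D (x`e))"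
          unfolding corr_def by (rule sum.inter_filter[symmetric]) (rule finite_subset[OF _ finX], auto)
        also have "\<dots> = D (z`e)" unfolding zs by simp
        also have "z`e = y`e" using KL[OF eV zX y] eV by (auto simp: z_def)
        finally show ?thesis using True sumsplit unfolding D_def by simp
      next
        case False
        then have fK': "f \<in> K'" using f unfolding K'_def by auto
        obtain I0 where I0: "I0 \<in> e" "I0 \<notin> f" using notsub[OF f False] by auto
        have I0V: "I0 \<in> V" using I0 eV by auto
        define S where "S = {x\<in>X. x`f = y`f}"
        define g where "g x = x(I0 := x0 I0)" for x
        have x0I0: "x0 I0 \<in> I0" using x0 I0V by auto
        have "(\<Sum>x\<in>S. corr x) = (\<Sum>z\<in>g`S. \<Sum>x\<in>{x. x\<in>S \<and> g x = z}. corr x)"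
          by (rule sum.group[symmetric]) (auto simp: S_def intro: finite_subset[OF _ finX])
        also have "\<dots> = 0"
        proof (rule sum.neutral, rule ballI)
          fix z assume "z \<in> g ` S"
          then obtain x1 where x1: "x1 \<in> S" "z = g x1" by auto
          have zX: "z \<in> X" using x1 upd_X[of x1 I0 "x0 I0"] I0V x0I0 by (auto simp: S_def g_def)
          have zI0: "z I0 = x0 I0" using x1 by (simp add: g_def)
          have "{x. x\<in>S \<and> g x = z} = (\<lambda>i. z(I0:=i)) ` I0"
          proof (intro set_eqI iffI)
            fix x assume "x \<in> {x. x\<in>S \<and> g x = z}"
            then have "x \<in> X" "g x = z" by (auto simp: S_def)
            then have "x = z(I0 := x I0)" "x I0 \<in> I0" using I0V
              by (auto simp: g_def)
            then show "x \<in> (\<lambda>i. z(I0:=i)) ` I0" by blast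
          next
            fix x assume "x \<in> (\<lambda>i. z(I0:=i)) ` I0"
            then obtain i where i: "i \<in> I0" "x = z(I0:=i)" by auto
            have "x ` f = z ` f" using i I0 by (auto intro!: image_cong)
            also have "\<dots> = x1 ` f" using x1 I0 by (auto simp: g_def intro!: image_cong)
            finally have "x ` f = y ` f" using x1 by (simp add: S_def)
            moreover have "x \<in> X" using i upd_X[OF zX I0V] by simp
            moreover have "g x = z" using i zI0 by (simp add: g_def fun_upd_idem)
            ultimately show "x \<in> {x. x\<in>S \<and> g x = z}" by (simp add: S_def)
          qed
          moreover have "inj_on (\<lambda>i. z(I0:=i)) I0"
            by (auto simp: inj_on_def fun_eq_iff)
          ultimately have "(\<Sum>x\<in>{x. x\<in>S \<and> g x = z}. corr x) = (\<Sum>i\<in>I0. corr (z(I0:=i)))"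
            by (simp add: sum.reindex)
          also have "\<dots> = 0"
          proof (cases "\<forall>I\<in>V-e. z I = x0 I")
            case False
            then have "\<And>i. corr (z(I0:=i)) = 0" using I0 unfolding corr_def by auto
            then show ?thesis by simp
          next
            case True
            define J' where "J' = z`(e-{I0})"
            have img: "(z(I0:=i))`e = insert i J'" for i
              using I0 by (auto simp: J'_def fun_upd_image)
            have "(\<Sum>i\<in>I0. corr (z(I0:=i))) = (\<Sum>i\<in>I0. D (insert i J'))"
            proof (rule sum.cong[OF refl])
              fix i assume i: "i \<in> I0"
              have c: "\<forall>I\<in>V-e. (z(I0:=i)) I = x0 I" using True I0 by auto
              show "corr (z(I0:=i)) = D (insert i J')" unfolding corr_def if_P[OF c] img[of i] by (rule refl)
            qed
            also have "\<dots> = (\<Sum>i\<in>I0. w (insert i J')) - (\<Sum>i\<in>I0. \<Sum>x\<in>{x\<in>X. x`e = insert i J'}. \<mu>0 x)"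
              by (simp add: D_def sum_subtractf)
            also have "(\<Sum>i\<in>I0. w (insert i J')) = w J'"
              using less.prems(4) eK I0 zX unfolding J'_def by auto
            also have "(\<Sum>i\<in>I0. \<Sum>x\<in>{x\<in>X. x`e = insert i J'}. \<mu>0 x) = (\<Sum>x\<in>{x\<in>X. x`(e-{I0}) = J'}. \<mu>0 x)"
            proof -
              have "(\<Sum>x\<in>{x\<in>X. x`(e-{I0}) = J'}. \<mu>0 x) = (\<Sum>i\<in>I0. \<Sum>x\<in>{x. x \<in> {x\<in>X. x`(e-{I0}) = J'} \<and> x I0 = i}. \<mu>0 x)"
                by (rule sum.group[symmetric]) (rule finite_subset[OF _ finX], blast, simp add: blk I0V, use I0V in \<open>auto simp: PiE_iff\<close>)
              also have "\<dots> = (\<Sum>i\<in>I0. \<Sum>x\<in>{x\<in>X. x`e = insert i J'}. \<mu>0 x)"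
              proof (rule sum.cong[OF refl], rule sum.cong[OF _ refl])
                fix i assume i: "i \<in> I0"
                have zi: "z(I0:=i) \<in> X" using upd_X[OF zX I0V i] .
                show "{x. x \<in> {x\<in>X. x`(e-{I0}) = J'} \<and> x I0 = i} = {x\<in>X. x`e = insert i J'}"
                proof (intro set_eqI iffI)
                  fix x assume x: "x \<in> {x. x \<in> {x\<in>X. x`(e-{I0}) = J'} \<and> x I0 = i}"
                  then have "x ` e = insert (x I0) (x ` (e-{I0}))" using I0 by blast
                  then show "x \<in> {x\<in>X. x`e = insert i J'}" using x by auto
                next
                  fix x assume x: "x \<in> {x\<in>X. x`e = insert i J'}"
                  then have "x ` e = (z(I0:=i)) ` e" using img by auto
                  then have "\<forall>I\<in>e. x I = (z(I0:=i)) I" using KL[OF eV _ zi] x by auto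
                  then have "x I0 = i" "\<forall>I\<in>e-{I0}. x I = z I" using I0 by auto
                  then show "x \<in> {x. x \<in> {x\<in>X. x`(e-{I0}) = J'} \<and> x I0 = i}"
                    using x by (auto simp: J'_def intro!: image_cong)
                qed
              qed
              finally show ?thesis by simp
            qed
            also have "w J' - (\<Sum>x\<in>{x\<in>X. x`(e-{I0}) = J'}. \<mu>0 x) = 0"
            proof -
              have "e - {I0} \<in> K'" using less.prems(3) eK I0 unfolding K'_def by auto
              then show ?thesis using mu0 zX unfolding J'_def by auto
            qed
            finally show ?thesis .
          qed
          finally show "(\<Sum>x\<in>{x. x\<in>S \<and> g x = z}. corr x) = 0" .
        qed
        finally have "(\<Sum>x\<in>S. corr x) = 0" .
        then show ?thesis using sumsplit[of f y] mu0 fK' y unfolding S_def by auto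
      qed
    qed
  qed
qed


lemma Xmem: "x \<in> X \<Longrightarrow> I \<in> V \<Longrightarrow> x I \<in> I"
  by (auto simp: PiE_iff)

lemma img_block: "e \<subseteq> V \<Longrightarrow> x \<in> X \<Longrightarrow> I \<in> V \<Longrightarrow> x`e \<inter> I = (if I \<in> e then {x I} else {})"
proof -
  assume a: "e \<subseteq> V" "x \<in> X" "I \<in> V"
  have "a \<in> I \<Longrightarrow> I' \<in> e \<Longrightarrow> a = x I' \<Longrightarrow> I' = I" for a I'
    using same_block[of I' I a] Xmem[of x I'] a by auto
  then show ?thesis using Xmem[OF a(2,3)] by auto
qed

lemma L1: "e \<subseteq> V \<Longrightarrow> x \<in> X \<Longrightarrow> x`e \<in> JJ e"
proof -
  assume a: "e \<subseteq> V" "x \<in> X"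
  have "x`e \<subseteq> \<Union>e" using Xmem[OF a(2)] a(1) by blast
  moreover have "\<forall>I\<in>e. card (x`e \<inter> I) = 1"
  proof
    fix I assume "I \<in> e"
    then have "x`e \<inter> I = {x I}" using img_block[OF a, of I] a(1) by auto
    then show "card (x`e \<inter> I) = 1" by simp
  qed
  ultimately show ?thesis unfolding JJ_def by blast
qed

lemma L2: assumes "e \<subseteq> V" "J \<in> JJ e" shows "\<exists>x\<in>X. x`e = J"
proof -
  have c: "\<And>I. I \<in> e \<Longrightarrow> card (J \<inter> I) = 1" and Js: "J \<subseteq> \<Union>e" using assms(2) by (auto simp: JJ_def)
  define p where "p I = (if I \<in> e then the_elem (J \<inter> I) else (SOME i. i \<in> I))" for I
  have pe: "J \<inter> I = {p I}" if Ie: "I \<in> e" for I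
  proof -
    obtain a where a: "J \<inter> I = {a}" using c[OF Ie] by (rule card_1_singletonE)
    then have "p I = a" using Ie by (simp add: p_def)
    then show ?thesis using a by simp
  qed
  define x where "x = restrict p V"
  have pI: "p I \<in> I" if "I \<in> V" for I
  proof (cases "I \<in> e")
    case True then show ?thesis using pe[OF True] by blast
  next
    case False
    have "\<exists>i. i \<in> I" using blk[OF that] by blast
    then have "(SOME i. i \<in> I) \<in> I" by (rule someI_ex)
    then show ?thesis using False by (simp add: p_def)
  qed
  have "x \<in> X" unfolding x_def using pI by (simp add: restrict_PiE_iff)
  moreover have "x`e = J"
  proof
    show "x`e \<subseteq> J"
    proof
      fix j assume "j \<in> x`e"
      then obtain I where I: "I \<in> e" "j = x I" by blast
      then have "j = p I" using assms(1) by (auto simp: x_def)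
      then show "j \<in> J" using pe[OF I(1)] by blast
    qed
    show "J \<subseteq> x`e"
    proof
      fix j assume "j \<in> J"
      then obtain I where I: "I \<in> e" "j \<in> I" using Js by auto
      then have "j = p I" using pe[of I] \<open>j \<in> J\<close> by auto
      moreover have "x I = p I" using I assms(1) by (auto simp: x_def)
      ultimately show "j \<in> x`e" using I(1) by (metis imageI)
    qed
  qed
  ultimately show ?thesis by blast
qed

lemma notin: "I \<in> e \<Longrightarrow> e \<subseteq> V \<Longrightarrow> y \<in> X \<Longrightarrow> i \<in> I \<Longrightarrow> i \<notin> y`(e-{I})"
  using img_block[of "e-{I}" y I] by auto

lemma Rset:
  assumes "I \<in> e" "e \<subseteq> V" "y \<in> X"
  shows "{J'\<in>JJ e. y`(e-{I}) \<subset> J'} = (\<lambda>i. insert i (y`(e-{I}))) ` I"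
proof (intro set_eqI iffI)
  fix J' assume J': "J' \<in> {J'\<in>JJ e. y`(e-{I}) \<subset> J'}"
  then have "J' \<in> JJ e" by blast
  then obtain x where x: "x \<in> X" "x`e = J'" using L2[OF assms(2)] by blast
  have sub: "y`(e-{I}) \<subseteq> x`e" using J' x(2) by blast
  have eq: "y I' = x I'" if I': "I' \<in> e-{I}" for I'
  proof -
    have "I' \<in> V" using I' assms(2) by blast
    then have "y I' \<in> I'" using Xmem[OF assms(3)] by blast
    moreover have "y I' \<in> x`e" using sub I' by blast
    ultimately have "y I' \<in> x`e \<inter> I'" by blast
    also have "x`e \<inter> I' = {x I'}" using img_block[OF assms(2) x(1) \<open>I' \<in> V\<close>] I' by simp
    finally show "y I' = x I'" by simp
  qed
  have "y`(e-{I}) = x`(e-{I})" using eq by (rule image_cong[OF refl])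
  moreover have "x`e = insert (x I) (x`(e-{I}))" using assms(1) by blast
  moreover have "x I \<in> I" using Xmem[OF x(1)] assms(1,2) by blast
  ultimately show "J' \<in> (\<lambda>i. insert i (y`(e-{I}))) ` I" using x(2) by (metis imageI)
next
  fix J' assume "J' \<in> (\<lambda>i. insert i (y`(e-{I}))) ` I"
  then obtain i where i: "i \<in> I" "J' = insert i (y`(e-{I}))" by blast
  have IV: "I \<in> V" using assms(1,2) by blast
  have "y(I:=i) \<in> X" using upd_X[OF assms(3) IV i(1)] .
  moreover have "(y(I:=i))`e = J'"
  proof -
    have "(y(I:=i))`e = insert ((y(I:=i)) I) ((y(I:=i))`(e-{I}))" using assms(1) by blast
    also have "(y(I:=i))`(e-{I}) = y`(e-{I})" by (rule image_cong) auto
    finally show ?thesis using i(2) by simp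
  qed
  ultimately have "J' \<in> JJ e" using L1[OF assms(2)] by metis
  moreover have "y`(e-{I}) \<subset> J'" using notin[OF assms i(1)] i(2) by blast
  ultimately show "J' \<in> {J'\<in>JJ e. y`(e-{I}) \<subset> J'}" by blast
qed

lemma Rinj: "I \<in> e \<Longrightarrow> e \<subseteq> V \<Longrightarrow> y \<in> X \<Longrightarrow> inj_on (\<lambda>i. insert i (y`(e-{I}))) I"
proof (rule inj_onI)
  fix i j assume a: "I \<in> e" "e \<subseteq> V" "y \<in> X" and ij: "i \<in> I" "j \<in> I" "insert i (y`(e-{I})) = insert j (y`(e-{I}))"
  then have "i \<in> insert j (y`(e-{I}))" by blast
  then show "i = j" using notin[OF a ij(1)] by blast
qed

lemma Rsum: "I \<in> e \<Longrightarrow> e \<subseteq> V \<Longrightarrow> y \<in> X \<Longrightarrow>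
  (\<Sum>J'\<in>{J'\<in>JJ e. y`(e-{I}) \<subset> J'}. w J') = (\<Sum>i\<in>I. w (insert i (y`(e-{I}))))"
  by (simp add: Rset sum.reindex Rinj)

lemma sub_iff: "e \<subseteq> V \<Longrightarrow> x \<in> X \<Longrightarrow> y \<in> X \<Longrightarrow> y`e \<subseteq> x`V \<longleftrightarrow> x`e = y`e"
proof
  assume a: "e \<subseteq> V" "x \<in> X" "y \<in> X" "y`e \<subseteq> x`V"
  have "\<forall>I\<in>e. x I = y I"
  proof
    fix I assume I: "I \<in> e"
    then have "y I \<in> x`V \<inter> I" using a Xmem[of y I] by auto
    moreover have "x`V \<inter> I = {x I}" using img_block[of V x I] a I by auto
    ultimately show "x I = y I" by simp
  qed
  then show "x`e = y`e" by auto
next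
  assume a: "e \<subseteq> V" "x \<in> X" "y \<in> X" "x`e = y`e"
  then show "y`e \<subseteq> x`V" by (metis image_mono)
qed

end

lemma sum_fun_apply': "(sum f A) z = sum (\<lambda>x. f x z) A" for f :: "'a \<Rightarrow> 'b \<Rightarrow> real"
  by (induct A rule: infinite_finite_induct) auto

lemma scaleR_fun_apply': "(c *\<^sub>R f) z = c * f z" for f :: "'b \<Rightarrow> real"
  by (simp add: scaleR_fun_def)

lemma prod01: "finite J \<Longrightarrow> (\<Prod>j\<in>J. if P j then (1::real) else 0) = (if \<forall>j\<in>J. P j then 1 else 0)"
  by (induct J rule: finite_induct) auto

theorem corollary3p7:
  fixes n :: nat and V :: "nat set set" and E :: "nat set set set"
  assumes "0 < n"
    and "is_hypergraph n V E"
    and "\<Union>V = {1..n}"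
    and "downward_closed E"
  shows "affine hull (MC V E) =
    {w \<in> RJH V E.
       (\<forall>I\<in>V. wsum w I = 1) \<and>
       (\<forall>e\<in>LV V \<union> E. \<forall>e'\<in>LV V \<union> E. e \<subset> e' \<and> card e' = card e + 1 \<longrightarrow>
          (\<forall>J\<in>JJ e. w J = (\<Sum>J'\<in>{J' \<in> JJ e'. J \<subset> J'}. w J')))}"
    (is "_ = ?R")
proof -
  have Vs: "\<And>I. I \<in> V \<Longrightarrow> I \<subseteq> {1..n} \<and> card I \<ge> 2" and dV: "pairwise disjnt V"
    and Es: "\<And>e. e \<in> E \<Longrightarrow> e \<subseteq> V \<and> card e \<ge> 2"
    using assms(2) unfolding is_hypergraph_def by auto
  have finV: "finite V"
    by (rule finite_subset[of V "Pow {1..n}"]) (use Vs in auto)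
  have blkV: "finite I \<and> I \<noteq> {}" if "I \<in> V" for I
  proof
    show "finite I" using Vs[OF that] finite_subset by blast
    show "I \<noteq> {}" using Vs[OF that] by auto
  qed
  interpret blocks V by standard (use finV blkV dV in auto)
  have finsub: "finite e" if "e \<subseteq> V" for e :: "nat set set" using finV that finite_subset by blast
  have LVE: "e \<subseteq> V \<and> e \<noteq> {}" if "e \<in> LV V \<union> E" for e
    using that Es[of e] by (auto simp: LV_def)
  have JH_iff: "J \<in> JH V E \<longleftrightarrow> (\<exists>e\<in>LV V \<union> E. J \<in> JJ e)" for J
    unfolding JH_def by blast
  have JJfin: "finite J" if "J \<in> JJ e" "e \<subseteq> V" for J e
  proof -
    have "J \<subseteq> \<Union>V" using that unfolding JJ_def by blast
    then have "J \<subseteq> {1..n}" using assms(3) by simp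
    then show ?thesis using finite_subset by blast
  qed
  have sing: "{i} \<in> JH V E" if "I \<in> V" "i \<in> I" for I i
  proof -
    have "{I} \<in> LV V" using that by (simp add: LV_def)
    moreover have "{i} \<in> JJ {I}" using that unfolding JJ_def by auto
    ultimately show ?thesis unfolding JH_iff by blast
  qed
  have pairdec: "\<exists>I. I \<in> e' \<and> e = e' - {I}" if "e \<subset> e'" "card e' = card e + 1" "e' \<subseteq> V" for e e'
  proof -
    have fe: "finite e" using finsub that by blast
    have "card (e' - e) = card e' - card e" using that(1) fe by (simp add: card_Diff_subset)
    then have "card (e' - e) = 1" using that(2) by simp
    then obtain I where "e' - e = {I}" by (rule card_1_singletonE)
    then show ?thesis using that(1) by blast
  qed
  show ?thesis
  proof
    show "affine hull (MC V E) \<subseteq> ?R"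
      unfolding MC_def affine_hull_convex_hull
    proof (rule hull_minimal)
      show "SH V E \<subseteq> ?R"
      proof
        fix w assume wSH: "w \<in> SH V E"
        have wR: "w \<in> RJH V E" and w1: "\<forall>I\<in>V. wsum w I = 1"
          and wprod: "\<And>J. J \<in> JH V E \<Longrightarrow> card J > 1 \<Longrightarrow> w J = (\<Prod>i\<in>J. w {i})"
          using wSH unfolding SH_def by auto
        have "w J = (\<Sum>J'\<in>{J' \<in> JJ e'. J \<subset> J'}. w J')"
          if e: "e \<in> LV V \<union> E" and e': "e' \<in> LV V \<union> E" and ee: "e \<subset> e'" "card e' = card e + 1"
            and J: "J \<in> JJ e" for e e' J
        proof -
          have e'V: "e' \<subseteq> V" and eV: "e \<subseteq> V" and ene: "e \<noteq> {}" using LVE[OF e'] LVE[OF e] by auto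
          obtain I where I: "I \<in> e'" "e = e' - {I}" using pairdec[OF ee e'V] by blast
          have IV: "I \<in> V" using I e'V by blast
          obtain y where y: "y \<in> X" "y`e = J" using L2[OF eV J] by blast
          have "(\<Sum>J'\<in>{J' \<in> JJ e'. J \<subset> J'}. w J') = (\<Sum>i\<in>I. w (insert i J))"
            using Rsum[OF I(1) e'V y(1), of w] y(2) I(2) by simp
          also have "\<dots> = (\<Sum>i\<in>I. w {i} * w J)"
          proof (rule sum.cong[OF refl])
            fix i assume i: "i \<in> I"
            have iJ: "i \<notin> J" using notin[OF I(1) e'V y(1) i] y(2) I(2) by simp
            have finJ: "finite J" using JJfin[OF J eV] .
            have Jne: "J \<noteq> {}" using y(2) ene by blast
            have "insert i J = (y(I:=i))`e'"
            proof -
              have "(y(I:=i))`e' = insert ((y(I:=i)) I) ((y(I:=i))`(e'-{I}))" using I(1) by blast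
              also have "(y(I:=i))`(e'-{I}) = y`(e'-{I})" by (rule image_cong) auto
              finally show ?thesis using y(2) I(2) by simp
            qed
            then have "insert i J \<in> JJ e'" using L1[OF e'V upd_X[OF y(1) IV i]] by simp
            then have iJH: "insert i J \<in> JH V E" using e' unfolding JH_iff by blast
            have "card (insert i J) > 1" using iJ finJ Jne by (simp add: card_gt_0_iff)
            then have "w (insert i J) = (\<Prod>j\<in>insert i J. w {j})" using wprod iJH by blast
            also have "\<dots> = w {i} * (\<Prod>j\<in>J. w {j})" using iJ finJ by simp
            also have "(\<Prod>j\<in>J. w {j}) = w J"
            proof (cases "card J > 1")
              case True
              have "J \<in> JH V E" using e J unfolding JH_iff by blast
              then show ?thesis using wprod True by simp
            next
              case False
              have "card J \<noteq> 0" using finJ Jne by simp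
              then have "card J = 1" using False by linarith
              then obtain j where "J = {j}" by (rule card_1_singletonE)
              then show ?thesis by simp
            qed
            finally show "w (insert i J) = w {i} * w J" .
          qed
          also have "\<dots> = wsum w I * w J" by (simp add: wsum_def sum_distrib_right)
          also have "\<dots> = w J" using w1 IV by simp
          finally show ?thesis by simp
        qed
        then show "w \<in> ?R" using wR w1 by blast
      qed
      show "affine ?R"
        unfolding affine_def
      proof (intro ballI allI impI)
        fix x y :: "nat set \<Rightarrow> real" and u v :: real
        assume x: "x \<in> ?R" and y: "y \<in> ?R" and uv: "u + v = 1"
        let ?z = "u *\<^sub>R x + v *\<^sub>R y"
        have zap: "?z J = u * x J + v * y J" for J by (simp add: scaleR_fun_apply')
        note xx = CollectD[OF x] and yy = CollectD[OF y]
        note xR = conjunct1[OF xx] and x1 = conjunct1[OF conjunct2[OF xx]] and xc = conjunct2[OF conjunct2[OF xx]]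
        note yR = conjunct1[OF yy] and y1 = conjunct1[OF conjunct2[OF yy]] and yc = conjunct2[OF conjunct2[OF yy]]
        from xR yR have "?z \<in> RJH V E" unfolding RJH_def by (simp add: scaleR_fun_apply')
        moreover have "\<forall>I\<in>V. wsum ?z I = 1"
        proof
          fix I assume "I \<in> V"
          have "wsum ?z I = u * wsum x I + v * wsum y I"
            by (simp add: wsum_def scaleR_fun_apply' sum.distrib sum_distrib_left)
          moreover have "wsum x I = 1" "wsum y I = 1" using x1 y1 \<open>I \<in> V\<close> by simp_all
          ultimately show "wsum ?z I = 1" using uv by simp
        qed
        moreover have "\<forall>e\<in>LV V \<union> E. \<forall>e'\<in>LV V \<union> E. e \<subset> e' \<and> card e' = card e + 1 \<longrightarrow>
          (\<forall>J\<in>JJ e. ?z J = (\<Sum>J'\<in>{J' \<in> JJ e'. J \<subset> J'}. ?z J'))"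
        proof (intro ballI impI)
          fix e e' J assume h: "e \<in> LV V \<union> E" "e' \<in> LV V \<union> E" "e \<subset> e' \<and> card e' = card e + 1" "J \<in> JJ e"
          have "x J = (\<Sum>J'\<in>{J' \<in> JJ e'. J \<subset> J'}. x J')" "y J = (\<Sum>J'\<in>{J' \<in> JJ e'. J \<subset> J'}. y J')"
            using xc[rule_format, OF h] yc[rule_format, OF h] by simp_all
          moreover have "(\<Sum>J'\<in>{J' \<in> JJ e'. J \<subset> J'}. ?z J') = u * (\<Sum>J'\<in>{J' \<in> JJ e'. J \<subset> J'}. x J') + v * (\<Sum>J'\<in>{J' \<in> JJ e'. J \<subset> J'}. y J')"
            by (simp add: scaleR_fun_apply' sum.distrib sum_distrib_left)
          ultimately show "?z J = (\<Sum>J'\<in>{J' \<in> JJ e'. J \<subset> J'}. ?z J')"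
            by (simp only: zap)
        qed
        ultimately show "?z \<in> ?R" by (intro CollectI conjI)
      qed
    qed
  next
    show "?R \<subseteq> affine hull (MC V E)"
    proof
      fix w assume w: "w \<in> ?R"
      note ww = CollectD[OF w]
      note wR = conjunct1[OF ww] and w1' = conjunct1[OF conjunct2[OF ww]] and wc' = conjunct2[OF conjunct2[OF ww]]
      have w1: "\<And>I. I \<in> V \<Longrightarrow> wsum w I = 1" using w1' by simp
      have wc: "\<And>e e' J. e \<in> LV V \<union> E \<Longrightarrow> e' \<in> LV V \<union> E \<Longrightarrow> e \<subset> e' \<Longrightarrow> card e' = card e + 1 \<Longrightarrow>
                J \<in> JJ e \<Longrightarrow> w J = (\<Sum>J'\<in>{J' \<in> JJ e'. J \<subset> J'}. w J')"
      proof -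
        fix e e' J assume a: "e \<in> LV V \<union> E" "e' \<in> LV V \<union> E" "e \<subset> e'" "card e' = card e + 1" "J \<in> JJ e"
        from a(3,4) have "e \<subset> e' \<and> card e' = card e + 1" by (rule conjI)
        from wc'[rule_format, OF a(1,2) this a(5)] show "w J = (\<Sum>J'\<in>{J' \<in> JJ e'. J \<subset> J'}. w J')" .
      qed
      define w' where "w' = w({} := 1)"
      define K where "K = insert {} (LV V \<union> E)"
      have KV: "\<forall>e\<in>K. e \<subseteq> V" using LVE unfolding K_def by blast
      have finK: "finite K"
        by (rule finite_subset[of K "Pow V"]) (use KV finV in auto)
      have dK: "\<forall>e\<in>K. \<forall>e'. e' \<subseteq> e \<longrightarrow> e' \<in> K"
      proof (intro ballI allI impI)
        fix e e' assume e: "e \<in> K" and e': "e' \<subseteq> e"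
        have fe': "finite e'" using finsub e' KV e by blast
        show "e' \<in> K"
        proof (cases "e' = {}")
          case True then show ?thesis by (simp add: K_def)
        next
          case False
          show ?thesis
          proof (cases "card e' = 1")
            case True
            then obtain I where I: "e' = {I}" by (rule card_1_singletonE)
            then have "I \<in> V" using e' e KV by blast
            then show ?thesis using I by (simp add: K_def LV_def)
          next
            case c: False
            have "card e' \<noteq> 0" using False fe' by simp
            then have "card e' > 1" using c by linarith
            moreover have "e \<in> E"
            proof -
              have "e \<noteq> {}" using False e' by blast
              moreover have "e \<notin> LV V"
              proof
                assume "e \<in> LV V"
                then obtain I where "e = {I}" by (auto simp: LV_def)
                then have "e' = {} \<or> e' = {I}" using e' by (simp add: subset_singletonD)
                then have "e' = {I}" using False by simp
                then show False using c by simp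
              qed
              ultimately show ?thesis using e unfolding K_def by blast
            qed
            ultimately have "e' \<in> E" using assms(4) e' unfolding downward_closed_def by (meson)
            then show ?thesis unfolding K_def by simp
          qed
        qed
      qed
      have consK: "\<forall>e\<in>K. \<forall>I\<in>e. \<forall>y\<in>X. w' (y`(e-{I})) = (\<Sum>i\<in>I. w' (insert i (y`(e-{I}))))"
      proof (intro ballI)
        fix e I y assume e: "e \<in> K" and I: "I \<in> e" and y: "y \<in> X"
        have eV: "e \<subseteq> V" using KV e by blast
        have IV: "I \<in> V" using I eV by blast
        have rhs: "(\<Sum>i\<in>I. w' (insert i (y`(e-{I})))) = (\<Sum>i\<in>I. w (insert i (y`(e-{I}))))"
          by (simp add: w'_def)
        show "w' (y`(e-{I})) = (\<Sum>i\<in>I. w' (insert i (y`(e-{I}))))"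
        proof (cases "e \<in> LV V")
          case True
          then obtain I' where "e = {I'}" by (auto simp: LV_def)
          then have "e - {I} = {}" using I by blast
          then have ye: "y`(e-{I}) = {}" by simp
          show ?thesis unfolding rhs ye using w1[OF IV] by (simp add: w'_def wsum_def)
        next
          case False
          then have eE: "e \<in> E" using e I unfolding K_def by blast
          define e0 where "e0 = e - {I}"
          have fe: "finite e" using finsub eV by blast
          have ce: "card e \<ge> 2" using Es eE by blast
          have ce0: "card e = card e0 + 1" using I fe unfolding e0_def
            by (simp add: card_Diff_singleton) (use ce in linarith)
          have e0ne: "e0 \<noteq> {}" using ce ce0 by auto
          have e0LE: "e0 \<in> LV V \<union> E"
          proof (cases "card e0 = 1")
            case True
            then obtain I' where I': "e0 = {I'}" by (rule card_1_singletonE)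
            then have "I' \<in> V" using eV unfolding e0_def by blast
            then show ?thesis using I' by (simp add: LV_def)
          next
            case False
            have "card e0 \<noteq> 0" using e0ne fe unfolding e0_def by simp
            then have "card e0 > 1" using False by linarith
            then show ?thesis using assms(4) eE unfolding downward_closed_def e0_def by blast
          qed
          have ss: "e0 \<subset> e" using I unfolding e0_def by blast
          have JJ0: "y`e0 \<in> JJ e0" using L1[of e0 y] eV y unfolding e0_def by blast
          have "w (y`e0) = (\<Sum>J'\<in>{J' \<in> JJ e. y`e0 \<subset> J'}. w J')"
            using wc[OF e0LE _ ss ce0 JJ0] eE by blast
          also have "\<dots> = (\<Sum>i\<in>I. w (insert i (y`e0)))"
            using Rsum[OF I eV y, of w] unfolding e0_def by simp
          finally show ?thesis unfolding rhs using e0ne unfolding e0_def w'_def by simp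
        qed
      qed
      obtain \<mu> where mu: "\<forall>e\<in>K. \<forall>y\<in>X. w' (y`e) = (\<Sum>x\<in>{x\<in>X. x`e = y`e}. \<mu> x)"
        using G[OF finK KV dK consK] by blast
      obtain x0 where x0: "x0 \<in> X" using Xne by blast
      have mu1: "sum \<mu> X = 1"
      proof -
        have "w' (x0`{}) = (\<Sum>x\<in>{x\<in>X. x`{} = x0`{}}. \<mu> x)" using mu x0 unfolding K_def by blast
        then show ?thesis by (simp add: w'_def)
      qed
      have marg: "w J = (\<Sum>x\<in>{x\<in>X. x`e = J}. \<mu> x)" if e: "e \<in> LV V \<union> E" and J: "J \<in> JJ e" for e J
      proof -
        have eV: "e \<subseteq> V" and ene: "e \<noteq> {}" using LVE[OF e] by auto
        obtain y where y: "y \<in> X" "y`e = J" using L2[OF eV J] by blast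
        have "w' (y`e) = (\<Sum>x\<in>{x\<in>X. x`e = y`e}. \<mu> x)" using mu y e unfolding K_def by blast
        moreover have "J \<noteq> {}" using y(2) ene by blast
        ultimately show ?thesis using y(2) by (simp add: w'_def)
      qed
      define s where "s x = (\<lambda>J. if J \<in> JH V E \<and> J \<subseteq> x`V then (1::real) else 0)" for x
      have sJJ: "s x J = (if x`e = J then 1 else 0)" if e: "e \<in> LV V \<union> E" and J: "J \<in> JJ e" and x: "x \<in> X" for e J x
      proof -
        have eV: "e \<subseteq> V" using LVE[OF e] by blast
        obtain y where y: "y \<in> X" "y`e = J" using L2[OF eV J] by blast
        have "J \<in> JH V E" using e J unfolding JH_iff by blast
        then show ?thesis using sub_iff[OF eV x y(1)] y(2) by (simp add: s_def)
      qed
      have sing_s: "s x {i} = (if x I = i then 1 else 0)" if "I \<in> V" "i \<in> I" "x \<in> X" for x I i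
      proof -
        have "{i} \<subseteq> x`V \<longleftrightarrow> i \<in> x`V \<inter> I" using that by blast
        also have "x`V \<inter> I = {x I}" using img_block[of V x I] that by simp
        finally show ?thesis using sing[OF that(1,2)] by (auto simp: s_def)
      qed
      have sSH: "s x \<in> SH V E" if x: "x \<in> X" for x
      proof -
        have "s x \<in> RJH V E" by (simp add: RJH_def s_def)
        moreover have "\<forall>J\<in>JH V E. s x J \<in> {0, 1}" by (simp add: s_def)
        moreover have "\<forall>I\<in>V. wsum (s x) I = 1"
        proof
          fix I assume I: "I \<in> V"
          have "wsum (s x) I = (\<Sum>i\<in>I. if x I = i then 1 else 0)"
            unfolding wsum_def using sing_s[OF I _ x] by simp
          also have "\<dots> = 1" using Xmem[OF x I] blk[OF I] by simp
          finally show "wsum (s x) I = 1" .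
        qed
        moreover have "\<forall>J\<in>JH V E. card J > 1 \<longrightarrow> s x J = (\<Prod>i\<in>J. s x {i})"
        proof (intro ballI impI)
          fix J assume J: "J \<in> JH V E" and "card J > 1"
          then obtain e where e: "e \<in> LV V \<union> E" "J \<in> JJ e" unfolding JH_iff by blast
          have eV: "e \<subseteq> V" using LVE[OF e(1)] by blast
          have "\<forall>j\<in>J. s x {j} = (if j \<in> x`V then 1 else 0)"
          proof
            fix j assume j: "j \<in> J"
            then obtain I where I: "I \<in> e" "j \<in> I" using e(2) unfolding JJ_def by blast
            have IV: "I \<in> V" using I eV by blast
            have "j \<in> x`V \<longleftrightarrow> j \<in> x`V \<inter> I" using I by blast
            also have "x`V \<inter> I = {x I}" using img_block[of V x I] x IV by simp
            finally show "s x {j} = (if j \<in> x`V then 1 else 0)" using sing_s[OF IV I(2) x] by auto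
          qed
          then have "(\<Prod>i\<in>J. s x {i}) = (\<Prod>j\<in>J. if j \<in> x`V then 1 else 0)" by simp
          also have "\<dots> = (if J \<subseteq> x`V then 1 else 0)" using prod01[OF JJfin[OF e(2) eV]] by (simp add: subset_eq)
          finally show "s x J = (\<Prod>i\<in>J. s x {i})" using J by (simp add: s_def)
        qed
        ultimately show ?thesis unfolding SH_def by blast
      qed
      have winj: "inj_on s X"
      proof (rule inj_onI)
        fix x z assume x: "x \<in> X" and z: "z \<in> X" and sxz: "s x = s z"
        show "x = z"
        proof (rule PiE_ext[OF x z])
          fix I assume I: "I \<in> V"
          have "s x {x I} = 1" using sing_s[OF I Xmem[OF x I] x] by simp
          then have "s z {x I} = 1" using sxz by simp
          then show "x I = z I" using sing_s[OF I Xmem[OF x I] z] by (auto split: if_splits)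
        qed
      qed
      have wsum_eq: "w = (\<Sum>x\<in>X. \<mu> x *\<^sub>R s x)"
      proof
        fix J
        have "(\<Sum>x\<in>X. \<mu> x *\<^sub>R s x) J = (\<Sum>x\<in>X. \<mu> x * s x J)"
          by (simp add: sum_fun_apply' scaleR_fun_apply')
        also have "\<dots> = w J"
        proof (cases "J \<in> JH V E")
          case True
          then obtain e where e: "e \<in> LV V \<union> E" "J \<in> JJ e" unfolding JH_iff by blast
          have "(\<Sum>x\<in>X. \<mu> x * s x J) = (\<Sum>x\<in>X. if x`e = J then \<mu> x else 0)"
            by (rule sum.cong[OF refl]) (simp add: sJJ[OF e])
          also have "\<dots> = (\<Sum>x\<in>{x\<in>X. x`e = J}. \<mu> x)" by (simp add: sum.inter_filter finX)
          also have "\<dots> = w J" using marg[OF e] by simp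
          finally show ?thesis .
        next
          case False
          then have "w J = 0" using wR unfolding RJH_def by blast
          then show ?thesis using False by (simp add: s_def)
        qed
        finally show "w J = (\<Sum>x\<in>X. \<mu> x *\<^sub>R s x) J" by simp
      qed
      have "w \<in> affine hull (SH V E)"
        unfolding affine_hull_explicit
      proof (intro CollectI exI conjI)
        show "finite (s`X)" using finX by blast
        show "s`X \<noteq> {}" using Xne by blast
        show "s`X \<subseteq> SH V E" using sSH by blast
        show "sum (\<lambda>v. \<mu> (the_inv_into X s v)) (s`X) = 1"
          using mu1 by (simp add: sum.reindex[OF winj] the_inv_into_f_f[OF winj])
        show "(\<Sum>v\<in>s`X. \<mu> (the_inv_into X s v) *\<^sub>R v) = w"
          using wsum_eq by (simp add: sum.reindex[OF winj] the_inv_into_f_f[OF winj])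
      qed
      then show "w \<in> affine hull (MC V E)" unfolding MC_def affine_hull_convex_hull .
    qed
  qed
qed

end
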